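(* For every integer $n\ge 1$, there is no tiling of the $3\times 3\times n$ box by bricks of size $1\times 2\times 2$.
   Context: A tiling of a $k\times m\times n$ box (made of $kmn$ unit cubes) by $a\times b\times c$ bricks is a partition of the box into non-overlapping axis-parallel boxes with integer corner coordinates, each congruent (by an axis-permuting placement) to the $a\times b\times c$ brick; all orientations are allowed. *)

theory Defs
  imports Main
begin

text \<open>Unit cubes are identified with their lower corners, integer triples (x,y,z);
  the cube with corner (x,y,z) is [x,x+1]x[y,y+1]x[z,z+1].\<close>

type_synonym cell = "int \<times> int \<times> int"

definition box_cells :: "int \<Rightarrow> int \<Rightarrow> int \<Rightarrow> nat \<Rightarrow> nat \<Rightarrow> nat \<Rightarrow> cell set" where
  "box_cells x y z p q r = {x..<x + int p} \<times> {y..<y + int q} \<times> {z..<z + int r}"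

definition is_brick :: "nat \<Rightarrow> nat \<Rightarrow> nat \<Rightarrow> cell set \<Rightarrow> bool" where
  "is_brick a b c B \<longleftrightarrow>
     (\<exists>x y z p q r. B = box_cells x y z p q r \<and>
        (p, q, r) \<in> {(a,b,c), (a,c,b), (b,a,c), (b,c,a), (c,a,b), (c,b,a)})"

definition tiles :: "nat \<Rightarrow> nat \<Rightarrow> nat \<Rightarrow> nat \<Rightarrow> nat \<Rightarrow> nat \<Rightarrow> cell set set \<Rightarrow> bool" where
  "tiles k m n a b c T \<longleftrightarrow>
     (\<forall>B\<in>T. is_brick a b c B) \<and>
     (\<forall>B\<in>T. \<forall>B'\<in>T. B \<noteq> B' \<longrightarrow> B \<inter> B' = {}) \<and>
     \<Union>T = box_cells 0 0 0 k m n"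

definition tileable :: "nat \<Rightarrow> nat \<Rightarrow> nat \<Rightarrow> nat \<Rightarrow> nat \<Rightarrow> nat \<Rightarrow> bool" where
  "tileable k m n a b c \<longleftrightarrow> (\<exists>T. tiles k m n a b c T)"

end

theory Submission
  imports Defs
begin

definition wt :: "cell \<Rightarrow> int" where
  "wt c = (case c of (x,y,z) \<Rightarrow> if even (x+y) then 1 else -1)"

lemma two_set: "{x..<x + int 2} = {x, x+1}" for x :: int
  by auto

lemma box_finite: "finite (box_cells x y z p q r)"
  unfolding box_cells_def by auto

lemma sum_box: "sum wt (box_cells x y z p q r) =
   (\<Sum>a\<in>{x..<x+int p}. \<Sum>b\<in>{y..<y+int q}. \<Sum>c\<in>{z..<z+int r}. wt (a,b,c))"
  unfolding box_cells_def sum.cartesian_product' by simp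

lemma brick_zero:
  assumes "is_brick 1 2 2 B" shows "sum wt B = 0"
proof -
  obtain x y z p q r where B: "B = box_cells x y z p q r"
    and pq: "p = 2 \<or> q = 2"
    using assms unfolding is_brick_def by auto
  show ?thesis
  proof (cases "p = 2")
    case True
    have "sum wt B = (\<Sum>a\<in>{x, x+1}. \<Sum>b\<in>{y..<y+int q}. \<Sum>c\<in>{z..<z+int r}. wt (a,b,c))"
      unfolding B sum_box True two_set ..
    also have "\<dots> = (\<Sum>b\<in>{y..<y+int q}. \<Sum>c\<in>{z..<z+int r}. wt (x,b,c) + wt (x+1,b,c))"
      by (simp add: sum.distrib)
    also have "\<dots> = 0"
      by (intro sum.neutral ballI) (simp add: wt_def)
    finally show ?thesis .
  next
    case False
    then have q: "q = 2" using pq by auto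
    have "sum wt B = (\<Sum>a\<in>{x..<x+int p}. \<Sum>b\<in>{y, y+1}. \<Sum>c\<in>{z..<z+int r}. wt (a,b,c))"
      unfolding B sum_box q two_set ..
    also have "\<dots> = (\<Sum>a\<in>{x..<x+int p}. \<Sum>c\<in>{z..<z+int r}. wt (a,y,c) + wt (a,y+1,c))"
      by (simp add: sum.distrib)
    also have "\<dots> = 0"
      by (intro sum.neutral ballI) (simp add: wt_def)
    finally show ?thesis .
  qed
qed

lemma three_set: "{0..<3} = {0,1,2::int}" by auto

lemma box_sum: "sum wt (box_cells 0 0 0 3 3 n) = int n"
proof -
  have c: "\<And>a b. (\<Sum>c\<in>{0..<int n}. wt (a,b,c)) = int n * wt (a,b,0)"
    by (simp add: wt_def)
  show ?thesis
    unfolding sum_box c by (simp add: three_set wt_def)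
qed

theorem mainTheorem16:
  fixes n :: nat
  assumes "n \<ge> 1"
  shows "\<not> tileable 3 3 n 1 2 2"
proof
  assume "tileable 3 3 n 1 2 2"
  then obtain T where t: "tiles 3 3 n 1 2 2 T" unfolding tileable_def by blast
  have br: "\<forall>B\<in>T. is_brick 1 2 2 B" and dj: "\<forall>B\<in>T. \<forall>B'\<in>T. B \<noteq> B' \<longrightarrow> B \<inter> B' = {}"
    and un: "\<Union>T = box_cells 0 0 0 3 3 n" using t unfolding tiles_def by auto
  have fT: "finite T"
    by (rule finite_subset[of _ "Pow (box_cells 0 0 0 3 3 n)"]) (use un box_finite in auto)
  have fB: "\<forall>B\<in>T. finite B" using br box_finite unfolding is_brick_def by auto
  have "sum wt (\<Union>T) = (\<Sum>B\<in>T. sum wt B)"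
    using sum.Union_disjoint[OF fB dj] by simp
  also have "\<dots> = 0" using br brick_zero by simp
  finally show False using un box_sum assms by simp
qed

end
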